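(* Let $C$ be a convex cone in a real vector space and $f:C\to\mathbb{R}$ a non-negative function that is positively homogeneous of degree $\alpha\ge 1$. Then $f$ is sub-convex if and only if $f$ is convex.
   Context: A cone is a subset $C$ with $\lambda C\subseteq C$ for all $\lambda>0$. $f$ is positively homogeneous of degree $\alpha$ if $f(\lambda x)=\lambda^{\alpha}f(x)$ for $x\in C$, $\lambda>0$. $f$ is sub-convex if every sublevel set $S_r(f)=\{x\in C: f(x)\le r\}$, $r\in\mathbb{R}$, is convex. *)

theory Defs
  imports "HOL-Analysis.Analysis"
begin

definition pos_cone :: "'a::real_vector set \<Rightarrow> bool" where
  "pos_cone C \<longleftrightarrow> (\<forall>t::real. t > 0 \<longrightarrow> (\<forall>x\<in>C. t *\<^sub>R x \<in> C))"

definition pos_homogeneous_on :: "'a::real_vector set \<Rightarrow> real \<Rightarrow> ('a \<Rightarrow> real) \<Rightarrow> bool" where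
  "pos_homogeneous_on C \<alpha> f \<longleftrightarrow>
     (\<forall>x\<in>C. \<forall>t::real. t > 0 \<longrightarrow> f (t *\<^sub>R x) = t powr \<alpha> * f x)"

definition sub_convex_on :: "'a::real_vector set \<Rightarrow> ('a \<Rightarrow> real) \<Rightarrow> bool" where
  "sub_convex_on C f \<longleftrightarrow> (\<forall>r::real. convex {x\<in>C. f x \<le> r})"

end

theory Submission
  imports Defs
begin

lemma key:
  fixes C :: "'a::real_vector set" and f :: "'a \<Rightarrow> real" and \<alpha> :: real
  assumes sc: "sub_convex_on C f" and cone: "pos_cone C"
    and hom: "pos_homogeneous_on C \<alpha> f" and al: "\<alpha> \<ge> 1"
    and x: "x \<in> C" and y: "y \<in> C" and a: "a > 0" and b: "b > 0"
    and fx: "f x \<le> a powr \<alpha>" and fy: "f y \<le> b powr \<alpha>"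
    and t0: "0 \<le> t" and t1: "t \<le> 1"
  shows "f ((1 - t) *\<^sub>R x + t *\<^sub>R y) \<le> (1 - t) * a powr \<alpha> + t * b powr \<alpha>"
proof -
  define x' where "x' = (1/a) *\<^sub>R x"
  define y' where "y' = (1/b) *\<^sub>R y"
  have x'C: "x' \<in> C" using cone x a unfolding pos_cone_def x'_def by simp
  have y'C: "y' \<in> C" using cone y b unfolding pos_cone_def y'_def by simp
  have "f x' = (1/a) powr \<alpha> * f x" using hom x a unfolding pos_homogeneous_on_def x'_def by simp
  also have "\<dots> \<le> (1/a) powr \<alpha> * a powr \<alpha>" using fx by (simp add: mult_left_mono)
  also have "\<dots> = 1" using a by (simp add: powr_divide)
  finally have fx': "f x' \<le> 1" .
  have "f y' = (1/b) powr \<alpha> * f y" using hom y b unfolding pos_homogeneous_on_def y'_def by simp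
  also have "\<dots> \<le> (1/b) powr \<alpha> * b powr \<alpha>" using fy by (simp add: mult_left_mono)
  also have "\<dots> = 1" using b by (simp add: powr_divide)
  finally have fy': "f y' \<le> 1" .
  define s where "s = (1 - t) * a + t * b"
  have s: "s > 0"
  proof (cases "t = 0")
    case True then show ?thesis using a by (simp add: s_def)
  next
    case False then have "t * b > 0" using t0 b by simp
    moreover have "(1-t) * a \<ge> 0" using t1 a by simp
    ultimately show ?thesis by (simp add: s_def)
  qed
  define l where "l = t * b / s"
  have l0: "0 \<le> l" using t0 b s by (simp add: l_def)
  have l1: "l \<le> 1" using t1 a s by (simp add: l_def s_def)
  define w where "w = (1 - l) *\<^sub>R x' + l *\<^sub>R y'"
  have "convex {z\<in>C. f z \<le> 1}" using sc unfolding sub_convex_on_def by blast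
  then have wS: "w \<in> {z\<in>C. f z \<le> 1}" using x'C y'C fx' fy' l0 l1
    unfolding w_def convex_alt by blast
  have "1 - l = (1 - t) * a / s" using s by (simp add: l_def s_def field_simps)
  then have eq: "(1 - t) *\<^sub>R x + t *\<^sub>R y = s *\<^sub>R w"
    using s a b by (simp add: w_def x'_def y'_def l_def scaleR_add_right)
  have "f ((1 - t) *\<^sub>R x + t *\<^sub>R y) = s powr \<alpha> * f w"
    using hom wS s unfolding eq pos_homogeneous_on_def by blast
  also have "\<dots> \<le> s powr \<alpha>" using wS by (simp add: mult_left_le)
  also have "\<dots> \<le> (1 - t) * a powr \<alpha> + t * b powr \<alpha>"
    using convex_onD[OF powr_convex[OF al], of t a b] t0 t1 a b by (simp add: s_def)
  finally show ?thesis .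
qed

theorem mainTheorem10:
  fixes C :: "'a::real_vector set" and f :: "'a \<Rightarrow> real" and \<alpha> :: real
  assumes "convex C" and "pos_cone C"
    and "\<forall>x\<in>C. f x \<ge> 0"
    and "pos_homogeneous_on C \<alpha> f" and "\<alpha> \<ge> 1"
  shows "sub_convex_on C f \<longleftrightarrow> convex_on C f"
proof
  assume sc: "sub_convex_on C f"
  show "convex_on C f"
  proof (rule convex_onI[OF _ assms(1)])
    fix t x y assume t: "(0::real) < t" "t < 1" and x: "x \<in> C" and y: "y \<in> C"
    show "f ((1 - t) *\<^sub>R x + t *\<^sub>R y) \<le> (1 - t) * f x + t * f y"
    proof (rule field_le_epsilon)
      fix d :: real assume d: "d > 0"
      define a where "a = (f x + d) powr (1/\<alpha>)"
      define b where "b = (f y + d) powr (1/\<alpha>)"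
      have fxp: "f x + d > 0" using assms(3) x d by fastforce
      have fyp: "f y + d > 0" using assms(3) y d by fastforce
      have aa: "a powr \<alpha> = f x + d" using fxp assms(5) by (simp add: a_def powr_powr)
      have bb: "b powr \<alpha> = f y + d" using fyp assms(5) by (simp add: b_def powr_powr)
      have "f ((1 - t) *\<^sub>R x + t *\<^sub>R y) \<le> (1 - t) * a powr \<alpha> + t * b powr \<alpha>"
        using key[OF sc assms(2) assms(4) assms(5) x y, of a b t] fxp fyp aa bb t d
        by (simp add: a_def b_def)
      also have "\<dots> = (1 - t) * f x + t * f y + d" by (simp add: aa bb algebra_simps)
      finally show "f ((1 - t) *\<^sub>R x + t *\<^sub>R y) \<le> (1 - t) * f x + t * f y + d" .
    qed
  qed
next
  assume cv: "convex_on C f"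
  show "sub_convex_on C f" unfolding sub_convex_on_def
  proof
    fix r
    show "convex {x\<in>C. f x \<le> r}" unfolding convex_alt
    proof (intro ballI allI impI)
      fix x y and u :: real assume x: "x \<in> {x\<in>C. f x \<le> r}" and y: "y \<in> {x\<in>C. f x \<le> r}"
        and u: "0 \<le> u \<and> u \<le> 1"
      have "(1 - u) *\<^sub>R x + u *\<^sub>R y \<in> C" using assms(1) x y u unfolding convex_alt by blast
      moreover have "f ((1 - u) *\<^sub>R x + u *\<^sub>R y) \<le> (1 - u) * f x + u * f y"
        using convex_onD[OF cv] x y u by blast
      moreover have "(1 - u) * f x + u * f y \<le> (1 - u) * r + u * r"
        using x y u by (intro add_mono mult_left_mono) auto
      ultimately show "(1 - u) *\<^sub>R x + u *\<^sub>R y \<in> {x\<in>C. f x \<le> r}" by (simp add: algebra_simps)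
    qed
  qed
qed

end
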